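(* For the black-bounce Kerr--Newman spacetime (metric in the context), define the antisymmetric tensor $f_{\mu\nu}$ in coordinates $(t,r,\theta,\phi)$ by the nonzero components $$f_{tr}=-f_{rt}=-a\cos\theta,\quad f_{r\phi}=-f_{\phi r}=-a^2\cos\theta\sin^2\theta,$$ $$f_{t\theta}=-f_{\theta t}=a\sqrt{r^2+\ell^2}\sin\theta,\quad f_{\theta\phi}=-f_{\phi\theta}=\sqrt{r^2+\ell^2}\,\sin\theta\,(r^2+\ell^2+a^2).$$ Then $f_{\mu\alpha}f^{\alpha}{}_{\nu}=K_{\mu\nu}$, where $K_{\mu\nu}$ is the Killing tensor defined in the context, but for $\ell\neq0$ (and $a\ne 0$) $f_{\mu\nu}$ is not a Killing--Yano tensor: $f_{\mu(\nu;\alpha)}\neq0$.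
   Context: The black-bounce Kerr--Newman spacetime is $$\mathrm{d}s^2=-\frac{\Delta}{\rho^2}(a\sin^2\theta\,\mathrm{d}\phi-\mathrm{d}t)^2+\frac{\sin^2\theta}{\rho^2}\big[(r^2+\ell^2+a^2)\mathrm{d}\phi-a\,\mathrm{d}t\big]^2+\frac{\rho^2}{\Delta}\mathrm{d}r^2+\rho^2\mathrm{d}\theta^2,$$ with $\rho^2=r^2+\ell^2+a^2\cos^2\theta$, $\Delta=r^2+\ell^2+a^2-2m\sqrt{r^2+\ell^2}+Q^2$. The Killing tensor is $K_{\mu\nu}=\rho^2(l_\mu n_\nu+l_\nu n_\mu)+(r^2+\ell^2)g_{\mu\nu}$ with $l^\mu=\big(\frac{r^2+\ell^2+a^2}{\Delta},1,0,\frac{a}{\Delta}\big)$ and $n^\mu=\frac{1}{2\rho^2}(r^2+\ell^2+a^2,-\Delta,0,a)$. Indices are raised/lowered with this metric. *)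

theory Defs
  imports "HOL-Analysis.Analysis"
begin

text \<open>Coordinates x = (t, r, theta, phi) are indexed by the type 4:
  index 0 = t, 1 = r, 2 = theta, 3 = phi.  Parameters: a (spin), l (bounce
  parameter ell), m (mass), Q (charge).\<close>

definition Sig :: "real \<Rightarrow> real^4 \<Rightarrow> real" where
  "Sig l x = (x$1)^2 + l^2"

definition rho2 :: "real \<Rightarrow> real \<Rightarrow> real^4 \<Rightarrow> real" where
  "rho2 a l x = Sig l x + a^2 * (cos (x$2))^2"

definition Delta :: "real \<Rightarrow> real \<Rightarrow> real \<Rightarrow> real \<Rightarrow> real^4 \<Rightarrow> real" where
  "Delta a l m Q x = Sig l x + a^2 - 2 * m * sqrt (Sig l x) + Q^2"

definition uco :: "real \<Rightarrow> real^4 \<Rightarrow> real^4" where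
  "uco a x = (\<chi> i. if i = 0 then -1 else if i = 3 then a * (sin (x$2))^2 else 0)"

definition wco :: "real \<Rightarrow> real \<Rightarrow> real^4 \<Rightarrow> real^4" where
  "wco a l x = (\<chi> i. if i = 0 then -a else if i = 3 then Sig l x + a^2 else 0)"

definition bbg :: "real \<Rightarrow> real \<Rightarrow> real \<Rightarrow> real \<Rightarrow> real^4 \<Rightarrow> real^4^4" where
  "bbg a l m Q x = (\<chi> i j.
      - Delta a l m Q x / rho2 a l x * (uco a x $ i) * (uco a x $ j)
      + (sin (x$2))^2 / rho2 a l x * (wco a l x $ i) * (wco a l x $ j)
      + (if i = 1 \<and> j = 1 then rho2 a l x / Delta a l m Q x else 0)
      + (if i = 2 \<and> j = 2 then rho2 a l x else 0))"

definition bbginv :: "real \<Rightarrow> real \<Rightarrow> real \<Rightarrow> real \<Rightarrow> real^4 \<Rightarrow> real^4^4" where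
  "bbginv a l m Q x = matrix_inv (bbg a l m Q x)"

definition lvec :: "real \<Rightarrow> real \<Rightarrow> real \<Rightarrow> real \<Rightarrow> real^4 \<Rightarrow> real^4" where
  "lvec a l m Q x = (\<chi> i. if i = 0 then (Sig l x + a^2) / Delta a l m Q x
      else if i = 1 then 1 else if i = 2 then 0 else a / Delta a l m Q x)"

definition nvec :: "real \<Rightarrow> real \<Rightarrow> real \<Rightarrow> real \<Rightarrow> real^4 \<Rightarrow> real^4" where
  "nvec a l m Q x = (\<chi> i. (1 / (2 * rho2 a l x)) * (if i = 0 then Sig l x + a^2
      else if i = 1 then - Delta a l m Q x else if i = 2 then 0 else a))"

definition lowered :: "real \<Rightarrow> real \<Rightarrow> real \<Rightarrow> real \<Rightarrow> real^4 \<Rightarrow> real^4 \<Rightarrow> real^4" where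
  "lowered a l m Q x v = bbg a l m Q x *v v"

definition Ktens :: "real \<Rightarrow> real \<Rightarrow> real \<Rightarrow> real \<Rightarrow> real^4 \<Rightarrow> real^4^4" where
  "Ktens a l m Q x = (\<chi> i j.
      rho2 a l x * ((lowered a l m Q x (lvec a l m Q x)) $ i * (lowered a l m Q x (nvec a l m Q x)) $ j
                  + (lowered a l m Q x (lvec a l m Q x)) $ j * (lowered a l m Q x (nvec a l m Q x)) $ i)
      + Sig l x * (bbg a l m Q x $ i $ j))"

definition fupper :: "real \<Rightarrow> real \<Rightarrow> real^4 \<Rightarrow> 4 \<Rightarrow> 4 \<Rightarrow> real" where
  "fupper a l x i j =
     (if i = 0 \<and> j = 1 then - a * cos (x$2)
      else if i = 1 \<and> j = 3 then - (a^2 * cos (x$2) * (sin (x$2))^2)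
      else if i = 0 \<and> j = 2 then a * sqrt (Sig l x) * sin (x$2)
      else if i = 2 \<and> j = 3 then sqrt (Sig l x) * sin (x$2) * (Sig l x + a^2)
      else 0)"

definition ften :: "real \<Rightarrow> real \<Rightarrow> real^4 \<Rightarrow> real^4^4" where
  "ften a l x = (\<chi> i j. fupper a l x i j - fupper a l x j i)"

definition pd :: "4 \<Rightarrow> (real^4 \<Rightarrow> real) \<Rightarrow> real^4 \<Rightarrow> real" where
  "pd k F x = deriv (\<lambda>s. F (x + s *\<^sub>R axis k 1)) 0"

definition Chr :: "real \<Rightarrow> real \<Rightarrow> real \<Rightarrow> real \<Rightarrow> 4 \<Rightarrow> 4 \<Rightarrow> 4 \<Rightarrow> real^4 \<Rightarrow> real" where
  "Chr a l m Q L A M x = (1/2) * (\<Sum>s\<in>UNIV. bbginv a l m Q x $ L $ s *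
      (pd A (\<lambda>y. bbg a l m Q y $ s $ M) x + pd M (\<lambda>y. bbg a l m Q y $ s $ A) x
       - pd s (\<lambda>y. bbg a l m Q y $ A $ M) x))"

definition covf :: "real \<Rightarrow> real \<Rightarrow> real \<Rightarrow> real \<Rightarrow> 4 \<Rightarrow> 4 \<Rightarrow> 4 \<Rightarrow> real^4 \<Rightarrow> real" where
  "covf a l m Q mu nu al x = pd al (\<lambda>y. ften a l y $ mu $ nu) x
     - (\<Sum>L\<in>UNIV. Chr a l m Q L al mu x * ften a l x $ L $ nu)
     - (\<Sum>L\<in>UNIV. Chr a l m Q L al nu x * ften a l x $ mu $ L)"

definition covf_sym :: "real \<Rightarrow> real \<Rightarrow> real \<Rightarrow> real \<Rightarrow> 4 \<Rightarrow> 4 \<Rightarrow> 4 \<Rightarrow> real^4 \<Rightarrow> real" where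
  "covf_sym a l m Q mu nu al x = (covf a l m Q mu nu al x + covf a l m Q mu al nu x) / 2"

definition bbdom :: "real \<Rightarrow> real \<Rightarrow> real \<Rightarrow> real \<Rightarrow> real^4 \<Rightarrow> bool" where
  "bbdom a l m Q x \<longleftrightarrow> Delta a l m Q x \<noteq> 0 \<and> rho2 a l x \<noteq> 0 \<and> sin (x$2) \<noteq> 0"

end

theory Submission imports Defs begin
lemma four_cases: "(i::4) = 0 \<or> i = 1 \<or> i = 2 \<or> i = 3"
proof -
  have h: "(4::4) = 0" by simp
  show ?thesis using exhaust_4[of i] unfolding h by blast
qed
lemma sum4: "sum f (UNIV::4 set) = f 0 + f 1 + f 2 + f 3"
proof -
  have h: "(4::4) = 0" by simp
  show ?thesis unfolding sum_4 h by (simp add: ac_simps)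
qed

lemma all4: "(\<forall>i::4. P i) \<longleftrightarrow> P 0 \<and> P 1 \<and> P 2 \<and> P 3"
proof
  assume "\<forall>i. P i" thus "P 0 \<and> P 1 \<and> P 2 \<and> P 3" by simp
next
  assume h: "P 0 \<and> P 1 \<and> P 2 \<and> P 3"
  show "\<forall>i. P i"
  proof
    fix i show "P i" using four_cases[of i] h by auto
  qed
qed

definition uv :: "real \<Rightarrow> real \<Rightarrow> real^4" where
  "uv a s = (\<chi> i. if i = 0 then -1 else if i = 3 then a * s^2 else 0)"
definition wv :: "real \<Rightarrow> real \<Rightarrow> real^4" where
  "wv a S = (\<chi> i. if i = 0 then -a else if i = 3 then S + a^2 else 0)"
definition Vv :: "real \<Rightarrow> real \<Rightarrow> real^4" where
  "Vv a S = (\<chi> i. if i = 0 then S + a^2 else if i = 3 then a else 0)"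
definition Wv :: "real \<Rightarrow> real \<Rightarrow> real^4" where
  "Wv a s = (\<chi> i. if i = 0 then a * s^2 else if i = 3 then 1 else 0)"

definition gM :: "real \<Rightarrow> real \<Rightarrow> real \<Rightarrow> real \<Rightarrow> real \<Rightarrow> real^4^4" where
  "gM a S s D r = (\<chi> i j. - D / r * (uv a s $ i) * (uv a s $ j) + s^2 / r * (wv a S $ i) * (wv a S $ j)
      + (if i = 1 \<and> j = 1 then r / D else 0) + (if i = 2 \<and> j = 2 then r else 0))"
definition giM :: "real \<Rightarrow> real \<Rightarrow> real \<Rightarrow> real \<Rightarrow> real \<Rightarrow> real^4^4" where
  "giM a S s D r = (\<chi> i j. (- (Vv a S $ i * Vv a S $ j) / D + Wv a s $ i * Wv a s $ j / s^2
      + (if i = 1 \<and> j = 1 then D else 0) + (if i = 2 \<and> j = 2 then 1 else 0)) / r)"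

lemma gM_inv: assumes "D\<noteq>0" "r\<noteq>0" "s\<noteq>0" "r = S + a^2*(1-s^2)"
  shows "gM a S s D r ** giM a S s D r = mat 1"
proof -
  have SS: "S = r - a^2*(1-s^2)" using assms by simp
  show ?thesis
  unfolding vec_eq_iff matrix_matrix_mult_def mat_def
  apply (simp add: sum4)
  apply (intro allI)
  subgoal for i j
    using four_cases[of i] four_cases[of j]
    apply (elim disjE)
    apply (simp_all add: gM_def giM_def uv_def wv_def Vv_def Wv_def)
    using assms(1-3) apply (simp_all add: field_simps SS)
    apply (simp_all add: eval_nat_numeral algebra_simps)
    done
  done
qed
definition fM :: "real \<Rightarrow> real \<Rightarrow> real \<Rightarrow> real \<Rightarrow> real^4^4" where
  "fM a q c s = (\<chi> i j.
     (if i = 0 \<and> j = 1 then - a * c else if i = 1 \<and> j = 0 then a * c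
      else if i = 1 \<and> j = 3 then - (a^2 * c * s^2) else if i = 3 \<and> j = 1 then a^2 * c * s^2
      else if i = 0 \<and> j = 2 then a * q * s else if i = 2 \<and> j = 0 then - (a * q * s)
      else if i = 2 \<and> j = 3 then q * s * (q^2 + a^2) else if i = 3 \<and> j = 2 then - (q * s * (q^2 + a^2))
      else 0))"

definition gP :: "real \<Rightarrow> real \<Rightarrow> real \<Rightarrow> real \<Rightarrow> real \<Rightarrow> real \<Rightarrow> real \<Rightarrow> real^4^4" where
  "gP a S s D r e E = (\<chi> i j. - D * e * (uv a s $ i) * (uv a s $ j) + s^2 * e * (wv a S $ i) * (wv a S $ j)
      + (if i = 1 \<and> j = 1 then r * E else 0) + (if i = 2 \<and> j = 2 then r else 0))"
definition giP :: "real \<Rightarrow> real \<Rightarrow> real \<Rightarrow> real \<Rightarrow> real \<Rightarrow> real \<Rightarrow> real \<Rightarrow> real^4^4" where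
  "giP a S s D e E t = (\<chi> i j. (- (Vv a S $ i * Vv a S $ j) * E + Wv a s $ i * Wv a s $ j * t
      + (if i = 1 \<and> j = 1 then D else 0) + (if i = 2 \<and> j = 2 then 1 else 0)) * e)"
definition lP :: "real \<Rightarrow> real \<Rightarrow> real \<Rightarrow> real^4" where
  "lP a S E = (\<chi> i. if i = 0 then (S + a^2) * E else if i = 1 then 1 else if i = 2 then 0 else a * E)"
definition nP :: "real \<Rightarrow> real \<Rightarrow> real \<Rightarrow> real \<Rightarrow> real^4" where
  "nP a S D e = (\<chi> i. (e / 2) * (if i = 0 then S + a^2 else if i = 1 then - D else if i = 2 then 0 else a))"

lemma sum_giP: fixes F :: "real^4^4"
  shows "(\<Sum>al\<in>UNIV. F $ mu $ al * (\<Sum>be\<in>UNIV. giP a S s D e E t $ al $ be * F $ nu $ be))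
    = e * (- E * (F *v Vv a S) $ mu * (F *v Vv a S) $ nu + t * (F *v Wv a s) $ mu * (F *v Wv a s) $ nu
           + D * F $ mu $ 1 * F $ nu $ 1 + F $ mu $ 2 * F $ nu $ 2)"
  by (simp add: sum4 giP_def matrix_vector_mult_def Vv_def Wv_def algebra_simps)

lemma FV: assumes "r = q^2 + a^2*c^2" "s^2 + c^2 = 1"
  shows "(fM a q c s *v Vv a (q^2)) $ i = (if i = 1 then a * c * r else 0)"
proof -
  have "\<forall>i. (fM a q c s *v Vv a (q^2)) $ i = (if i = 1 then a * c * r else 0)"
    unfolding all4 apply (simp add: sum4 fM_def matrix_vector_mult_def Vv_def)
    apply (insert assms) apply ((intro conjI)?) by algebra+
  then show ?thesis by (rule spec)
qed

lemma FW: assumes "r = q^2 + a^2*c^2" "s^2 + c^2 = 1"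
  shows "(fM a q c s *v Wv a s) $ i = (if i = 2 then q * s * r else 0)"
proof -
  have "\<forall>i. (fM a q c s *v Wv a s) $ i = (if i = 2 then q * s * r else 0)"
    unfolding all4 apply (simp add: sum4 fM_def matrix_vector_mult_def Wv_def)
    apply (insert assms) apply ((intro conjI)?) by algebra+
  then show ?thesis by (rule spec)
qed

lemma col1: "fM a q c s $ i $ 1 = a * c * (uv a s $ i)"
  using four_cases[of i] by (elim disjE) (simp_all add: fM_def uv_def power2_eq_square)
lemma col2: "fM a q c s $ i $ 2 = - q * s * (wv a (q^2) $ i)"
  using four_cases[of i] by (elim disjE) (simp_all add: fM_def wv_def)

lemma gl: assumes "D * E = 1" "r * e = 1" "r = q^2 + a^2*c^2" "s^2 + c^2 = 1"
  shows "(gP a (q^2) s D r e E *v lP a (q^2) E) $ i = uv a s $ i + r * E * (if i = 1 then 1 else 0)"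
proof -
  have "\<forall>i. (gP a (q^2) s D r e E *v lP a (q^2) E) $ i = uv a s $ i + r * E * (if i = 1 then 1 else 0)"
    unfolding all4 apply (simp add: sum4 gP_def lP_def matrix_vector_mult_def uv_def wv_def)
    apply (insert assms) apply ((intro conjI)?) by algebra+
  then show ?thesis by (rule spec)
qed

lemma gP_mv: "(gP a S s D r e E *v v) $ i = - D * e * (\<Sum>j\<in>UNIV. uv a s $ j * v $ j) * uv a s $ i
   + s^2 * e * (\<Sum>j\<in>UNIV. wv a S $ j * v $ j) * wv a S $ i
   + (if i = 1 then r * E * v $ 1 else 0) + (if i = 2 then r * v $ 2 else 0)"
  unfolding matrix_vector_mult_def gP_def
  by (simp add: sum4 algebra_simps)

lemma gn: assumes "D * E = 1" "r * e = 1" "r = q^2 + a^2*c^2" "s^2 + c^2 = 1"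
  shows "(gP a (q^2) s D r e E *v nP a (q^2) D e) $ i = D * e / 2 * uv a s $ i - (if i = 1 then 1/2 else 0)"
proof -
  have s2: "s^2 = 1 - c^2" using assms(4) by simp
  have "(\<Sum>j\<in>UNIV. uv a s $ j * nP a (q^2) D e $ j) = e / 2 * (a^2 * s^2 - (q^2 + a^2))"
    by (simp add: sum4 uv_def nP_def field_simps power2_eq_square)
  also have "\<dots> = - (e * r) / 2" unfolding s2 assms(3) by (simp add: algebra_simps)
  finally have un: "(\<Sum>j\<in>UNIV. uv a s $ j * nP a (q^2) D e $ j) = - (e * r) / 2" .
  have wn: "(\<Sum>j\<in>UNIV. wv a (q^2) $ j * nP a (q^2) D e $ j) = 0"
    by (simp add: sum4 wv_def nP_def field_simps)
  have n1: "nP a (q^2) D e $ 1 = - D * e / 2" by (simp add: nP_def)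
  have n2: "nP a (q^2) D e $ 2 = 0" by (simp add: nP_def)
  have rE: "r * E * (- D * e / 2) = - (r * e) * (D * E) / 2" by (simp add: algebra_simps)
  show ?thesis unfolding gP_mv un wn n1 n2 using assms(1,2) rE
    by (simp add: algebra_simps)
qed
lemma comb: fixes a c q s r e E t D U1 U2 W1 W2 d1 d1' d2 d2' :: real
  assumes "D * E = 1" "r * e = 1" "s^2 * t = 1" "r = q^2 + a^2*c^2"
  shows "e*(-E*(d1*(a*c*r))*(d1'*(a*c*r)) + t*(d2*(q* s *r))*(d2'*(q* s *r)) + D*(a*c*U1)*(a*c*U2) + (-q* s *W1)*(-q* s *W2))
 = r*((U1 + r*E*d1)*(D*e/2*U2 - d1'/2) + (U2 + r*E*d1')*(D*e/2*U1 - d1/2)) + q^2*(-D*e*U1*U2 + s^2*e*W1*W2 + r*E*d1*d1' + r*d2*d2')"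
  using assms by algebra
lemma part1_poly: assumes "D * E = 1" "r * e = 1" "s^2 * t = 1" "r = q^2 + a^2*c^2" "s^2 + c^2 = 1"
  shows "(\<Sum>al\<in>UNIV. fM a q c s $ mu $ al *
                         (\<Sum>be\<in>UNIV. giP a (q^2) s D e E t $ al $ be * fM a q c s $ nu $ be))
       = r * ((gP a (q^2) s D r e E *v lP a (q^2) E) $ mu * (gP a (q^2) s D r e E *v nP a (q^2) D e) $ nu
         + (gP a (q^2) s D r e E *v lP a (q^2) E) $ nu * (gP a (q^2) s D r e E *v nP a (q^2) D e) $ mu)
      + q^2 * (gP a (q^2) s D r e E $ mu $ nu)"
proof -
  define d1 where "d1 = (if mu = 1 then 1 else (0::real))"
  define d1' where "d1' = (if nu = 1 then 1 else (0::real))"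
  define d2 where "d2 = (if mu = 2 then 1 else (0::real))"
  define d2' where "d2' = (if nu = 2 then 1 else (0::real))"
  define U1 where "U1 = uv a s $ mu"
  define U2 where "U2 = uv a s $ nu"
  define W1 where "W1 = wv a (q^2) $ mu"
  define W2 where "W2 = wv a (q^2) $ nu"
  have FVm: "(fM a q c s *v Vv a (q^2)) $ mu = d1*(a*c*r)" using FV[OF assms(4,5)] by (simp add: d1_def)
  have FVn: "(fM a q c s *v Vv a (q^2)) $ nu = d1'*(a*c*r)" using FV[OF assms(4,5)] by (simp add: d1'_def)
  have FWm: "(fM a q c s *v Wv a s) $ mu = d2*(q * s * r)" using FW[OF assms(4,5)] by (simp add: d2_def)
  have FWn: "(fM a q c s *v Wv a s) $ nu = d2'*(q * s * r)" using FW[OF assms(4,5)] by (simp add: d2'_def)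
  have c1m: "fM a q c s $ mu $ 1 = a*c*U1" using col1 by (simp add: U1_def)
  have c1n: "fM a q c s $ nu $ 1 = a*c*U2" using col1 by (simp add: U2_def)
  have c2m: "fM a q c s $ mu $ 2 = -q * s * W1" using col2 by (simp add: W1_def)
  have c2n: "fM a q c s $ nu $ 2 = -q * s * W2" using col2 by (simp add: W2_def)
  have glm: "(gP a (q^2) s D r e E *v lP a (q^2) E) $ mu = U1 + r*E*d1" using gl[OF assms(1,2,4,5)] by (simp add: U1_def d1_def)
  have gln: "(gP a (q^2) s D r e E *v lP a (q^2) E) $ nu = U2 + r*E*d1'" using gl[OF assms(1,2,4,5)] by (simp add: U2_def d1'_def)
  have gnm: "(gP a (q^2) s D r e E *v nP a (q^2) D e) $ mu = D*e/2*U1 - d1/2" using gn[OF assms(1,2,4,5)] by (simp add: U1_def d1_def)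
  have gnn: "(gP a (q^2) s D r e E *v nP a (q^2) D e) $ nu = D*e/2*U2 - d1'/2" using gn[OF assms(1,2,4,5)] by (simp add: U2_def d1'_def)
  have gPe: "gP a (q^2) s D r e E $ mu $ nu = -D*e*U1*U2 + s^2*e*W1*W2 + r*E*d1*d1' + r*d2*d2'"
    by (simp add: gP_def U1_def U2_def W1_def W2_def d1_def d1'_def d2_def d2'_def)
  show ?thesis
    unfolding sum_giP FVm FVn FWm FWn c1m c1n c2m c2n glm gln gnm gnn gPe
    by (rule comb[OF assms(1-4)])
qed
lemma inv_eq: fixes A B :: "real^4^4" assumes "A ** B = mat 1" shows "matrix_inv A = B"
proof -
  have BA: "B ** A = mat 1" using assms matrix_left_right_inverse by blast
  have "\<exists>A'. A ** A' = mat 1 \<and> A' ** A = mat 1" using assms BA by blast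
  then have h: "A ** matrix_inv A = mat 1 \<and> matrix_inv A ** A = mat 1"
    unfolding matrix_inv_def by (rule someI_ex)
  have "matrix_inv A = matrix_inv A ** (A ** B)" using assms by simp
  also have "\<dots> = B" using h by (simp add: matrix_mul_assoc)
  finally show ?thesis .
qed

lemma Sig_nonneg: "0 \<le> Sig l x" by (simp add: Sig_def)

lemma bbg_gM: "bbg a l m Q x = gM a (Sig l x) (sin (x$2)) (Delta a l m Q x) (rho2 a l x)"
  unfolding vec_eq_iff by (simp add: bbg_def gM_def uco_def wco_def uv_def wv_def)

lemma rho_eq: "rho2 a l x = Sig l x + a^2 * (1 - (sin (x$2))^2)"
  by (simp add: rho2_def cos_squared_eq)

lemma bbginv_giM: assumes "bbdom a l m Q x"
  shows "bbginv a l m Q x = giM a (Sig l x) (sin (x$2)) (Delta a l m Q x) (rho2 a l x)"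
  unfolding bbginv_def bbg_gM
  apply (rule inv_eq, rule gM_inv)
  using assms by (auto simp: bbdom_def rho_eq)

lemma gM_gP: "gM a S s D r = gP a S s D r (1/r) (1/D)"
  unfolding vec_eq_iff by (simp add: gM_def gP_def)

lemma giM_giP: "giM a S s D r = giP a S s D (1/r) (1/D) (1/s^2)"
  unfolding vec_eq_iff by (simp add: giM_def giP_def)

lemma ften_fM: "ften a l x = fM a (sqrt (Sig l x)) (cos (x$2)) (sin (x$2))"
proof -
  have h: "(sqrt (Sig l x))^2 = Sig l x" using Sig_nonneg by simp
  have "\<forall>i j. ften a l x $ i $ j = fM a (sqrt (Sig l x)) (cos (x$2)) (sin (x$2)) $ i $ j"
    unfolding all4 by (simp add: ften_def fupper_def fM_def h)
  then show ?thesis unfolding vec_eq_iff by blast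
qed

lemma part1: assumes "bbdom a l m Q x"
  shows "(\<Sum>al\<in>UNIV. ften a l x $ mu $ al *
                         (\<Sum>be\<in>UNIV. bbginv a l m Q x $ al $ be * ften a l x $ nu $ be))
                      = Ktens a l m Q x $ mu $ nu"
proof -
  define q where "q = sqrt (Sig l x)"
  define c where "c = cos (x$2)"
  define s where "s = sin (x$2)"
  define D where "D = Delta a l m Q x"
  define r where "r = rho2 a l x"
  have hq: "Sig l x = q^2" using Sig_nonneg by (simp add: q_def)
  have D0: "D \<noteq> 0" and r0: "r \<noteq> 0" and s0: "s \<noteq> 0" using assms by (auto simp: bbdom_def D_def r_def s_def)
  have rr: "r = q^2 + a^2*c^2" by (simp add: r_def rho2_def hq c_def)
  have sc: "s^2 + c^2 = 1" by (simp add: s_def c_def)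
  have g: "bbg a l m Q x = gP a (q^2) s D r (1/r) (1/D)"
    unfolding bbg_gM gM_gP hq[symmetric] s_def D_def r_def ..
  have gi: "bbginv a l m Q x = giP a (q^2) s D (1/r) (1/D) (1/s^2)"
    unfolding bbginv_giM[OF assms] giM_giP hq[symmetric] s_def D_def r_def ..
  have f: "ften a l x = fM a q c s" unfolding ften_fM q_def c_def s_def ..
  have lv: "lvec a l m Q x = lP a (q^2) (1/D)"
    unfolding vec_eq_iff by (simp add: lvec_def lP_def hq D_def)
  have nv: "nvec a l m Q x = nP a (q^2) D (1/r)"
    unfolding vec_eq_iff by (simp add: nvec_def nP_def hq D_def r_def)
  have K: "Ktens a l m Q x $ mu $ nu = r * ((gP a (q^2) s D r (1/r) (1/D) *v lP a (q^2) (1/D)) $ mu * (gP a (q^2) s D r (1/r) (1/D) *v nP a (q^2) D (1/r)) $ nu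
         + (gP a (q^2) s D r (1/r) (1/D) *v lP a (q^2) (1/D)) $ nu * (gP a (q^2) s D r (1/r) (1/D) *v nP a (q^2) D (1/r)) $ mu)
      + q^2 * (gP a (q^2) s D r (1/r) (1/D) $ mu $ nu)"
    unfolding Ktens_def lowered_def g lv nv by (simp add: hq r_def[symmetric])
  show ?thesis unfolding gi f K
    by (rule part1_poly) (use D0 r0 s0 rr sc in auto)
qed
definition pt :: "real \<Rightarrow> real^4" where
  "pt r0 = (\<chi> i. if i = 1 then r0 else if i = 2 then pi/2 else 0)"

lemma pt_1 [simp]: "pt r0 $ 1 = r0" by (simp add: pt_def)
lemma pt_2 [simp]: "pt r0 $ 2 = pi/2" by (simp add: pt_def)
lemma pt_line1: "pt r0 + s *\<^sub>R axis 1 1 = pt (r0 + s)"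
  unfolding vec_eq_iff all4 by (simp add: pt_def axis_def)
lemma pt_line2: "(pt r0 + s *\<^sub>R axis 2 1) $ 2 = pi/2 + s" "(pt r0 + s *\<^sub>R axis 2 1) $ 1 = r0"
  by (simp_all add: pt_def axis_def)

lemma pd_zero [simp]: "pd k (\<lambda>y. 0) x = 0" by (simp add: pd_def)

lemma bbg_zeros [simp]:
  "bbg a l m Q y $ 0 $ 1 = 0" "bbg a l m Q y $ 1 $ 0 = 0" "bbg a l m Q y $ 0 $ 2 = 0" "bbg a l m Q y $ 2 $ 0 = 0"
  "bbg a l m Q y $ 1 $ 2 = 0" "bbg a l m Q y $ 2 $ 1 = 0" "bbg a l m Q y $ 1 $ 3 = 0" "bbg a l m Q y $ 3 $ 1 = 0"
  "bbg a l m Q y $ 2 $ 3 = 0" "bbg a l m Q y $ 3 $ 2 = 0"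
  by (simp_all add: bbg_def uco_def wco_def)

lemma bbg22: "bbg a l m Q y $ 2 $ 2 = rho2 a l y" by (simp add: bbg_def uco_def wco_def)

lemma P1: "pd 1 (\<lambda>y. bbg a l m Q y $ 2 $ 2) (pt r0) = 2 * r0"
proof -
  have "(\<lambda>s. bbg a l m Q (pt r0 + s *\<^sub>R axis 1 1) $ 2 $ 2) = (\<lambda>s. (r0 + s)^2 + l^2)"
    by (simp add: pt_line1 bbg22 rho2_def Sig_def)
  moreover have "((\<lambda>s. (r0 + s)^2 + l^2) has_real_derivative 2 * r0) (at 0)"
    by (auto intro!: derivative_eq_intros)
  ultimately show ?thesis unfolding pd_def by (simp add: DERIV_imp_deriv)
qed

lemma P3: "pd 2 (\<lambda>y. ften a l y $ 0 $ 1) (pt r0) = a"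
proof -
  have "(\<lambda>s. ften a l (pt r0 + s *\<^sub>R axis 2 1) $ 0 $ 1) = (\<lambda>s. - a * cos (pi/2 + s))"
    by (simp add: ften_def fupper_def pt_line2)
  moreover have "((\<lambda>s. - a * cos (pi/2 + s)) has_real_derivative a) (at 0)"
    by (auto intro!: derivative_eq_intros)
  ultimately show ?thesis unfolding pd_def by (simp add: DERIV_imp_deriv)
qed

lemma P4: assumes "l \<noteq> 0" shows "pd 1 (\<lambda>y. ften a l y $ 0 $ 2) (pt r0) = a * r0 / sqrt (r0^2 + l^2)"
proof -
  have "(\<lambda>s. ften a l (pt r0 + s *\<^sub>R axis 1 1) $ 0 $ 2) = (\<lambda>s. a * sqrt ((r0 + s)^2 + l^2))"
    by (simp add: ften_def fupper_def pt_line1 Sig_def)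
  moreover have "((\<lambda>s. a * sqrt ((r0 + s)^2 + l^2)) has_real_derivative a * r0 / sqrt (r0^2 + l^2)) (at 0)"
  proof -
    have "0 < l^2 + r0^2" using assms by (simp add: add_pos_nonneg)
    then show ?thesis by (auto intro!: derivative_eq_intros simp: field_simps)
  qed
  ultimately show ?thesis unfolding pd_def by (simp add: DERIV_imp_deriv)
qed
lemma g00_form: "bbg a l m Q y $ 0 $ 0 = (a^2 * (sin (y$2))^2 - Delta a l m Q y) / rho2 a l y"
  by (simp add: bbg_def uco_def wco_def diff_divide_distrib power2_eq_square)
lemma g30_form: "bbg a l m Q y $ 3 $ 0 = (a * (sin (y$2))^2 * Delta a l m Q y - a * (sin (y$2))^2 * (Sig l y + a^2)) / rho2 a l y"
  by (simp add: bbg_def uco_def wco_def diff_divide_distrib add_divide_distrib power2_eq_square algebra_simps)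
lemma rho_pt: "rho2 a l (pt t) = Sig l (pt t)" by (simp add: rho2_def)
lemma Sig_pt: "Sig l (pt t) = t^2 + l^2" by (simp add: Sig_def)

lemma P2: assumes "l \<noteq> 0"
  shows "a * pd 1 (\<lambda>y. bbg a l m Q y $ 0 $ 0) (pt r0) + pd 1 (\<lambda>y. bbg a l m Q y $ 3 $ 0) (pt r0) = 0"
proof -
  have pos: "\<And>t. 0 < t^2 + l^2" using assms by (simp add: add_nonneg_pos)
  have nz: "\<And>t. Sig l (pt t) \<noteq> 0" using pos unfolding Sig_pt by (metis less_irrefl)
  define h where "h s = (a^2 - Delta a l m Q (pt (r0+s))) / Sig l (pt (r0+s))" for s
  have e0: "(\<lambda>s. bbg a l m Q (pt r0 + s *\<^sub>R axis 1 1) $ 0 $ 0) = h"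
    by (rule ext) (simp add: pt_line1 g00_form rho_pt h_def)
  have e3: "(\<lambda>s. bbg a l m Q (pt r0 + s *\<^sub>R axis 1 1) $ 3 $ 0) = (\<lambda>s. - a - a * h s)"
  proof
    fix s show "bbg a l m Q (pt r0 + s *\<^sub>R axis 1 1) $ 3 $ 0 = - a - a * h s"
      using nz[of "r0+s"] by (simp add: pt_line1 g30_form rho_pt h_def field_simps)
  qed
  have hh: "h = (\<lambda>s. (a^2 - ((r0+s)^2 + l^2 + a^2 - 2 * m * sqrt ((r0+s)^2 + l^2) + Q^2)) / ((r0+s)^2 + l^2))"
    by (rule ext) (simp add: h_def Delta_def Sig_pt)
  have "\<exists>h'. (h has_real_derivative h') (at 0)"
    unfolding hh
    apply (rule exI)
    apply (insert pos[of r0])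
    apply (rule derivative_eq_intros refl | force)+
    done
  then obtain h' where dh: "(h has_real_derivative h') (at 0)" by blast
  have d3: "((\<lambda>s. - a - a * h s) has_real_derivative (- a * h')) (at 0)"
    using dh by (auto intro!: derivative_eq_intros)
  show ?thesis unfolding pd_def e0 e3 using DERIV_imp_deriv[OF dh] DERIV_imp_deriv[OF d3] by simp
qed
lemma covf_val: assumes "l \<noteq> 0" "Delta a l m Q (pt r0) \<noteq> 0"
  shows "covf_sym a l m Q 0 1 2 (pt r0) = a * (1 - r0 / sqrt (r0^2 + l^2)) / 2"
proof -
  define S0 where "S0 = r0^2 + l^2"
  define q0 where "q0 = sqrt S0"
  define D0 where "D0 = Delta a l m Q (pt r0)"
  have S0p: "0 < S0" using assms(1) by (simp add: S0_def add_nonneg_pos)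
  have q0p: "0 < q0" using S0p by (simp add: q0_def)
  have q0s: "q0^2 = S0" using S0p by (simp add: q0_def)
  have D0nz: "D0 \<noteq> 0" using assms(2) by (simp add: D0_def)
  have dom: "bbdom a l m Q (pt r0)" using assms S0p by (simp add: bbdom_def rho_pt Sig_pt S0_def)
  have gi: "bbginv a l m Q (pt r0) = giM a S0 1 D0 S0"
    unfolding bbginv_giM[OF dom] by (simp add: rho_pt Sig_pt S0_def D0_def)
  have f: "\<And>y. y = pt r0 \<Longrightarrow> ften a l y = fM a q0 0 1"
    unfolding ften_fM by (simp add: Sig_pt S0_def q0_def)
  have G3: "pd 1 (\<lambda>y. bbg a l m Q y $ 3 $ 0) (pt r0) = - a * pd 1 (\<lambda>y. bbg a l m Q y $ 0 $ 0) (pt r0)"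
    using P2[OF assms(1), of a m Q r0] by simp
  show ?thesis
    unfolding covf_sym_def covf_def Chr_def gi f[OF refl]
    apply (simp add: sum4 giM_def fM_def Vv_def Wv_def P1 P3 P4[OF assms(1)] G3)
    apply (simp only: S0_def[symmetric] q0_def[symmetric])
    apply (simp only: q0s[symmetric])
    using D0nz q0p apply (simp add: field_simps)
    apply algebra
    done
qed
lemma exists_r0: "\<exists>r0. Delta a l m Q (pt r0) \<noteq> 0"
proof (rule ccontr)
  assume "\<not> (\<exists>r0. Delta a l m Q (pt r0) \<noteq> 0)"
  then have z: "\<And>t. Delta a l m Q (pt t) = 0" by blast
  define T where "T t = sqrt (t^2 + l^2)" for t :: real
  have TT: "\<And>t. (T t)^2 = t^2 + l^2" by (simp add: T_def)
  have e: "\<And>t. (T t)^2 - 2 * m * T t + (a^2 + Q^2) = 0"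
    using z unfolding TT by (simp add: Delta_def Sig_pt T_def algebra_simps)
  have mono: "\<And>t u. 0 \<le> t \<Longrightarrow> t < u \<Longrightarrow> T t < T u"
    unfolding T_def by (simp add: power_strict_mono)
  have key: "\<And>t u. T t \<noteq> T u \<Longrightarrow> T t + T u = 2 * m"
  proof -
    fix t u assume ne: "T t \<noteq> T u"
    have "(T t - T u) * (T t + T u - 2 * m) = ((T t)^2 - 2 * m * T t + (a^2 + Q^2)) - ((T u)^2 - 2 * m * T u + (a^2 + Q^2))"
      by (simp add: algebra_simps power2_eq_square)
    also have "\<dots> = 0" using e by simp
    finally show "T t + T u = 2 * m" using ne by simp
  qed
  have "T 0 < T 1" "T 0 < T 2" "T 1 < T 2" using mono by auto
  then have "T 0 + T 1 = 2 * m" "T 0 + T 2 = 2 * m" using key by auto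
  then have "T 1 = T 2" by simp
  with \<open>T 1 < T 2\<close> show False by simp
qed

lemma dom_pt: assumes "l \<noteq> 0" "Delta a l m Q (pt r0) \<noteq> 0" shows "bbdom a l m Q (pt r0)"
proof -
  have "0 < r0^2 + l^2" using assms(1) by (simp add: add_nonneg_pos)
  then show ?thesis using assms by (simp add: bbdom_def rho_pt Sig_pt)
qed

lemma val_nz: assumes "l \<noteq> 0" "a \<noteq> 0" shows "a * (1 - r0 / sqrt (r0^2 + l^2)) / 2 \<noteq> 0"
proof -
  have "r0 \<le> sqrt (r0^2)" by simp
  also have "sqrt (r0^2) < sqrt (r0^2 + l^2)"
    by (rule real_sqrt_less_mono) (use assms(1) in simp)
  finally have lt: "r0 < sqrt (r0^2 + l^2)" .
  have pos: "0 < sqrt (r0^2 + l^2)" using assms(1) by (simp add: add_nonneg_pos)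
  have "r0 / sqrt (r0^2 + l^2) < 1" using lt pos by simp
  then have "1 - r0 / sqrt (r0^2 + l^2) \<noteq> 0" by linarith
  then show ?thesis using assms(2) by simp
qed

theorem mainTheorem9:
  fixes a l m Q :: real
  shows "(\<forall>x. bbdom a l m Q x \<longrightarrow>
            (\<forall>mu nu. (\<Sum>al\<in>UNIV. ften a l x $ mu $ al *
                         (\<Sum>be\<in>UNIV. bbginv a l m Q x $ al $ be * ften a l x $ nu $ be))
                      = Ktens a l m Q x $ mu $ nu))
         \<and> (l \<noteq> 0 \<and> a \<noteq> 0 \<longrightarrow>
            (\<exists>x. bbdom a l m Q x \<and> (\<exists>mu nu al. covf_sym a l m Q mu nu al x \<noteq> 0)))"
proof (intro conjI allI impI)
  fix x mu nu assume "bbdom a l m Q x"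
  then show "(\<Sum>al\<in>UNIV. ften a l x $ mu $ al *
                         (\<Sum>be\<in>UNIV. bbginv a l m Q x $ al $ be * ften a l x $ nu $ be))
                      = Ktens a l m Q x $ mu $ nu" by (rule part1)
next
  assume h: "l \<noteq> 0 \<and> a \<noteq> 0"
  obtain r0 where r0: "Delta a l m Q (pt r0) \<noteq> 0" using exists_r0 by blast
  have "covf_sym a l m Q 0 1 2 (pt r0) \<noteq> 0"
    unfolding covf_val[OF conjunct1[OF h] r0] using val_nz h by blast
  then show "\<exists>x. bbdom a l m Q x \<and> (\<exists>mu nu al. covf_sym a l m Q mu nu al x \<noteq> 0)"
    using dom_pt[OF conjunct1[OF h] r0] by blast
qed
end
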